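(* Let $(A,[\cdot,\cdot])$ be an Acaa-algebra over a field $\mathbb K$ of characteristic $0$, and let $e,f\in A$ be linearly independent. If $[e,f]\neq 0$, then $e,f,[e,f]$ are linearly independent.
   Context: An Acaa-algebra over a field $\mathbb K$ of characteristic $0$ is a $\mathbb K$-vector space $A$ with a bilinear product $[\cdot,\cdot]$ which is anticommutative, $[x,y]=-[y,x]$, and satisfies $[x_1,[x_2,x_3]]=[x_2,[x_3,x_1]]$ for all $x_1,x_2,x_3\in A$. *)

theory Defs
  imports Main "HOL.Vector_Spaces"
begin

definition bilinear_product ::
  "('k::field \<Rightarrow> 'v::ab_group_add \<Rightarrow> 'v) \<Rightarrow> ('v \<Rightarrow> 'v \<Rightarrow> 'v) \<Rightarrow> bool" where
  "bilinear_product scale br \<longleftrightarrow>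
     (\<forall>x y z. br (x + y) z = br x z + br y z) \<and>
     (\<forall>x y z. br x (y + z) = br x y + br x z) \<and>
     (\<forall>a x y. br (scale a x) y = scale a (br x y)) \<and>
     (\<forall>a x y. br x (scale a y) = scale a (br x y))"

definition acaa_algebra ::
  "('k::field \<Rightarrow> 'v::ab_group_add \<Rightarrow> 'v) \<Rightarrow> ('v \<Rightarrow> 'v \<Rightarrow> 'v) \<Rightarrow> bool" where
  "acaa_algebra scale br \<longleftrightarrow>
     vector_space scale \<and> bilinear_product scale br \<and>
     (\<forall>x y. br x y = - br y x) \<and>
     (\<forall>x1 x2 x3. br x1 (br x2 x3) = br x2 (br x3 x1))"

end

theory Submission
  imports Defs
begin

theorem mainTheorem2:
  fixes scale :: "'k::field_char_0 \<Rightarrow> 'v::ab_group_add \<Rightarrow> 'v"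
    and br :: "'v \<Rightarrow> 'v \<Rightarrow> 'v"
    and e f :: 'v
  assumes "acaa_algebra scale br"
    and "e \<noteq> f" and "\<not> module.dependent scale {e, f}"
    and "br e f \<noteq> 0"
  shows "distinct [e, f, br e f] \<and> \<not> module.dependent scale {e, f, br e f}"
proof -
  interpret V: vector_space scale using assms(1) unfolding acaa_algebra_def by blast
  have bl: "bilinear_product scale br" and ac: "\<And>x y. br x y = - br y x"
    and cy: "\<And>x1 x2 x3. br x1 (br x2 x3) = br x2 (br x3 x1)"
    using assms(1) unfolding acaa_algebra_def by blast+
  have addr: "\<And>x y z. br x (y + z) = br x y + br x z"
    and sr: "\<And>a x y. br x (scale a y) = scale a (br x y)"
    using bl unfolding bilinear_product_def by blast+
  have halve: "v = 0" if "v = - v" for v :: 'v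
  proof -
    have "v + v = 0" using that by (metis add.right_inverse)
    moreover have "scale (1+1) v = scale 1 v + scale 1 v" by (rule V.scale_left_distrib)
    ultimately have "scale (1+1) v = 0" by simp
    moreover have "(1+1::'k) \<noteq> 0" by simp
    ultimately show ?thesis using V.scale_eq_0_iff by blast
  qed
  define g where "g = br e f"
  have g0: "g \<noteq> 0" using assms(4) g_def by simp
  have xx: "br x x = 0" for x using ac[of x x] halve by blast
  have b0: "br x 0 = 0" for x using addr[of x 0 0] by simp
  have neg: "br x (- y) = - br x y" for x y
    using addr[of x y "- y"] b0[of x] by (simp add: eq_neg_iff_add_eq_0 add.commute)
  have eg: "br e g = 0"
    unfolding g_def by (rule halve) (metis cy[of e e f] ac[of f e] neg)
  have fg: "br f g = 0"
    unfolding g_def using cy[of f e f] xx b0 by simp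
  have fe: "br f e = - g" using ac[of f e] g_def by simp
  have ge: "g \<noteq> e" using fg fe g0 by auto
  have gf: "g \<noteq> f" using eg g0 g_def by auto
  have e0: "e \<noteq> 0" and f0: "f \<noteq> 0" using assms(3) V.dependent_zero by auto
  have dist: "distinct [e, f, g]" using assms(2) ge gf by auto
  have "\<not> V.dependent {e, f, g}"
  proof
    assume "V.dependent {e, f, g}"
    then obtain u where u: "\<exists>v\<in>{e,f,g}. u v \<noteq> 0" "(\<Sum>v\<in>{e,f,g}. scale (u v) v) = 0"
      using V.dependent_finite[of "{e,f,g}"] by auto
    have s: "scale (u e) e + (scale (u f) f + scale (u g) g) = 0"
      using u(2) dist by simp
    have "br e (scale (u e) e + (scale (u f) f + scale (u g) g)) = br e 0" using s by simp
    moreover have "br e 0 = 0" using addr[of e 0 0] by simp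
    ultimately have "scale (u f) g = 0" by (simp add: addr sr xx eg g_def[symmetric])
    hence uf: "u f = 0" using g0 by simp
    have "br f (scale (u e) e + (scale (u f) f + scale (u g) g)) = br f 0" using s by simp
    moreover have "br f 0 = 0" using addr[of f 0 0] by simp
    ultimately have "scale (u e) (- g) = 0" by (simp add: addr sr xx fg fe)
    hence ue: "u e = 0" using g0 by simp
    have "scale (u g) g = 0" using s uf ue by simp
    hence "u g = 0" using g0 by simp
    with u(1) ue uf show False by auto
  qed
  thus ?thesis using dist g_def by simp
qed

end
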